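(* Let $w'\in\mathcal{W}^e_n$ and let $(O',E')\to(O,E)$ be one application of the step $(\omega)$ during the computation of $\Omega(w')$. Then $(O',E')$ is obtained from $(O,E)$ by applying one step $(\psi)$.
   Context: Fix a finite totally ordered alphabet $A$. Words are finite sequences over $A$; $-$ is the empty word. $<$ is lexicographic order (a proper prefix is smaller than the word); $\infty$ is a formal symbol with $w<\infty$ for all words $w$. A Lyndon word is a nonempty word strictly smaller than each of its proper nonempty suffixes. Every word has a unique Lyndon factorization $w=\ell_1\cdots\ell_m$ into Lyndon words with $\ell_1\ge\dots\ge\ell_m$, written $\ell_1|\cdots|\ell_m$. Odd/even refer to lengths. For a Lyndon word $\ell$ with $|\ell|\ge2$, its standard factorization is $\ell=rs$ with $s$ the longest proper suffix of $\ell$ that is Lyndon (equivalently the smallest proper nonempty suffix). $\mathcal{W}^e_n$: words of length $n$ whose Lyndon factors are all even except possibly one factor of length one. Iterated standard factorization (ISF) of a Lyndon word $\ell$, $|\ell|\ge2$, with respect to $u$ (a word or $\infty$): the unique factorization $\ell=r_js_js_{j-1}\cdots s_1$, $j\ge1$, such that (a) for every $i\in[j]$, $s_i$ is the smallest proper nonempty suffix of $r_js_j\cdots s_i$; (b) for $i\in[j-1]$, $s_i$ is even and $s_i<u$; (c) $s_j$ is odd or $u\le s_j$. Computation of $\Omega(w')$ for $w'\in\mathcal{W}^e_n$: start with $(O',E')=(-,w')$; if $n$ is odd, remove the unique length-one Lyndon factor from $E'$ and set $O'$ equal to that letter. While $E'$ is nonempty, apply step $(\omega)$: let $O'=o'_1|\cdots|o'_h$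 and $E'=e'_1|\cdots|e'_k$ (with $o'_h=\infty$ if $O'$ is empty). If $o'_h<e'_1$, update to (S') $(O'e'_1,\ e'_2\cdots e'_k)$. Otherwise let $e'_1=r_js_js_{j-1}\cdots s_1$ be the ISF of $e'_1$ with respect to $o'_h$ and update to (P') $(o'_1\cdots o'_{h-1}r_js_jo'_h,\ s_{j-1}\cdots s_1e'_2\cdots e'_k)$ if $o'_h\le s_j$, or to (F') $(O's_jr_j,\ s_{j-1}\cdots s_1e'_2\cdots e'_k)$ if $s_j<o'_h$. When $E'$ is empty, $\Omega(w')=O'$. Step $(\psi)$ on a pair of words $(O,E)$ with $|O|\ge2$: let $O=o_1|\cdots|o_m$ (with $o_{m-1}=\infty$ if $m=1$); $o_m$ is splittable if $|o_m|\ge2$ and its standard factorization $o_m=rs$ satisfies $s<o_{m-1}$. Update to: (S) $(o_1\cdots o_{m-1}r,\ sE)$ if splittable and $r$ odd; (P) $(o_1\cdots o_{m-1}s,\ rE)$ if splittable and $r$ even; (F) $(o_1\cdots o_{m-2},\ o_mo_{m-1}E)$ if not splittable. *)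

theory Defs
  imports Main
begin

text \<open>Words over a finite totally ordered alphabet are lists. The formal symbol
  infinity is represented by None in the type option of words.\<close>

definition wlt :: "'a::linorder list \<Rightarrow> 'a list \<Rightarrow> bool" where
  "wlt u v \<longleftrightarrow> (u, v) \<in> lexord {(a, b). a < b}"

definition wle :: "'a::linorder list \<Rightarrow> 'a list \<Rightarrow> bool" where
  "wle u v \<longleftrightarrow> wlt u v \<or> u = v"

fun w_lt_ext :: "'a::linorder list \<Rightarrow> 'a list option \<Rightarrow> bool" where
  "w_lt_ext w None = True"
| "w_lt_ext w (Some u) = wlt w u"

fun ext_lt_w :: "'a::linorder list option \<Rightarrow> 'a list \<Rightarrow> bool" where
  "ext_lt_w None w = False"
| "ext_lt_w (Some u) w = wlt u w"

fun ext_le_w :: "'a::linorder list option \<Rightarrow> 'a list \<Rightarrow> bool" where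
  "ext_le_w None w = False"
| "ext_le_w (Some u) w = wle u w"

definition lyndon :: "'a::linorder list \<Rightarrow> bool" where
  "lyndon w \<longleftrightarrow> w \<noteq> [] \<and> (\<forall>k. 0 < k \<and> k < length w \<longrightarrow> wlt w (drop k w))"

definition lyndon_factorization :: "'a::linorder list \<Rightarrow> 'a list list \<Rightarrow> bool" where
  "lyndon_factorization w fs \<longleftrightarrow>
     concat fs = w \<and> (\<forall>f\<in>set fs. lyndon f) \<and> sorted_wrt (\<lambda>x y. wle y x) fs"

definition LF :: "'a::linorder list \<Rightarrow> 'a list list" where
  "LF w = (THE fs. lyndon_factorization w fs)"

definition std_fact :: "'a::linorder list \<Rightarrow> 'a list \<Rightarrow> 'a list \<Rightarrow> bool" where
  "std_fact l r s \<longleftrightarrow> l = r @ s \<and> r \<noteq> [] \<and> lyndon s \<and>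
     (\<forall>k. 0 < k \<and> k < length l \<and> lyndon (drop k l) \<longrightarrow> length (drop k l) \<le> length s)"

definition min_proper_suffix :: "'a::linorder list \<Rightarrow> 'a list \<Rightarrow> bool" where
  "min_proper_suffix l s \<longleftrightarrow> (\<exists>k. 0 < k \<and> k < length l \<and> s = drop k l) \<and>
     (\<forall>k. 0 < k \<and> k < length l \<longrightarrow> wle s (drop k l))"

definition We :: "nat \<Rightarrow> 'a::linorder list set" where
  "We n = {w. length w = n \<and>
     (\<forall>f\<in>set (LF w). even (length f) \<or> length f = 1) \<and>
     length (filter (\<lambda>f. odd (length f)) (LF w)) \<le> 1}"

text \<open>Iterated standard factorization of l with respect to u (None = infinity):
  l = r @ concat ts where ts = [s_j, s_(j-1), ..., s_1].\<close>
definition is_ISF :: "'a::linorder list option \<Rightarrow> 'a list \<Rightarrow> 'a list \<Rightarrow> 'a list list \<Rightarrow> bool" where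
  "is_ISF u l r ts \<longleftrightarrow> 2 \<le> length l \<and> ts \<noteq> [] \<and> l = r @ concat ts \<and>
     (\<forall>i < length ts. min_proper_suffix (r @ concat (take (Suc i) ts)) (ts ! i)) \<and>
     (\<forall>i. 0 < i \<and> i < length ts \<longrightarrow> even (length (ts ! i)) \<and> w_lt_ext (ts ! i) u) \<and>
     (odd (length (ts ! 0)) \<or> ext_le_w u (ts ! 0))"

definition last_factor :: "'a::linorder list \<Rightarrow> 'a list option" where
  "last_factor w = (if LF w = [] then None else Some (last (LF w)))"

definition omega_step :: "'a::linorder list \<times> 'a list \<Rightarrow> 'a list \<times> 'a list \<Rightarrow> bool" where
  "omega_step S1 S2 \<longleftrightarrow> (case S1 of (O1, E1) \<Rightarrow> case S2 of (O2, E2) \<Rightarrow>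
     E1 \<noteq> [] \<and>
     (let ofs = LF O1; efs = LF E1; e1 = hd efs; oh = last_factor O1 in
       (ext_lt_w oh e1 \<and> O2 = O1 @ e1 \<and> E2 = concat (tl efs)) \<or>
       (\<not> ext_lt_w oh e1 \<and> (\<exists>r ts. is_ISF oh e1 r ts \<and>
          ((ext_le_w oh (hd ts) \<and> O2 = concat (butlast ofs) @ r @ hd ts @ the oh \<and>
              E2 = concat (tl ts) @ concat (tl efs)) \<or>
           (w_lt_ext (hd ts) oh \<and> O2 = O1 @ hd ts @ r \<and>
              E2 = concat (tl ts) @ concat (tl efs)))))))"

definition omega_init :: "'a::linorder list \<Rightarrow> 'a list \<times> 'a list" where
  "omega_init w = (if odd (length w)
     then (concat (filter (\<lambda>f. length f = 1) (LF w)), concat (filter (\<lambda>f. length f \<noteq> 1) (LF w)))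
     else ([], w))"

inductive omega_reach :: "'a::linorder list \<Rightarrow> 'a list \<times> 'a list \<Rightarrow> bool" for w where
  init: "omega_reach w (omega_init w)"
| step: "omega_reach w S1 \<Longrightarrow> snd S1 \<noteq> [] \<Longrightarrow> omega_step S1 S2 \<Longrightarrow> omega_reach w S2"

definition splittable :: "'a::linorder list option \<Rightarrow> 'a list \<Rightarrow> bool" where
  "splittable prev om \<longleftrightarrow> 2 \<le> length om \<and> (\<exists>r s. std_fact om r s \<and> w_lt_ext s prev)"

definition psi_step :: "'a::linorder list \<times> 'a list \<Rightarrow> 'a list \<times> 'a list \<Rightarrow> bool" where
  "psi_step S1 S2 \<longleftrightarrow> (case S1 of (O1, E) \<Rightarrow> case S2 of (O2, E2) \<Rightarrow>
     2 \<le> length O1 \<and>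
     (let fs = LF O1; m = length fs; om = last fs;
          prev = (if m = 1 then None else Some (fs ! (m - 2))) in
       (splittable prev om \<and> (\<exists>r s. std_fact om r s \<and>
          ((odd (length r) \<and> O2 = concat (butlast fs) @ r \<and> E2 = s @ E) \<or>
           (even (length r) \<and> O2 = concat (butlast fs) @ s \<and> E2 = r @ E)))) \<or>
       (\<not> splittable prev om \<and> 2 \<le> m \<and>
          O2 = concat (take (m - 2) fs) \<and> E2 = om @ fs ! (m - 2) @ E)))"

end

theory Submission
  imports Defs "HOL-Library.List_Lexorder"
begin


lemma wlt_iff: "wlt u v \<longleftrightarrow> u < v"
  by (simp add: wlt_def list_less_def)
lemma wle_iff: "wle u v \<longleftrightarrow> u \<le> v"
  by (simp add: wle_def wlt_iff list_le_def)

lemma less_append_same[simp]: "(w @ u < w @ v) \<longleftrightarrow> (u < (v::'a::linorder list))"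
  by (induct w) auto
lemma le_append_same[simp]: "(w @ u \<le> w @ v) \<longleftrightarrow> (u \<le> (v::'a::linorder list))"
  by (induct w) auto
lemma le_append_right: "(u::'a::linorder list) \<le> u @ v"
  by (induct u) auto
lemma less_append_right: "v \<noteq> [] \<Longrightarrow> (u::'a::linorder list) < u @ v"
  by (induct u) (auto simp: neq_Nil_conv)
lemma less_cases: "(u::'a::linorder list) < v \<Longrightarrow> (\<exists>z. v = u @ z) \<or> (\<forall>x y. u @ x < v @ y)"
proof (induct u arbitrary: v)
  case Nil then show ?case by auto
next
  case (Cons a u) then show ?case by (cases v) auto
qed
lemma less_append_both: "(u::'a::linorder list) < v \<Longrightarrow> \<not> (\<exists>z. v = u @ z) \<Longrightarrow> u @ x < v @ y"
  using less_cases by blast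
lemma prefix_less_not: "(u::'a::linorder list) @ x < v \<Longrightarrow> \<not>(\<exists>z. v = u @ z) \<Longrightarrow> u < v"
proof (induct u arbitrary: v)
  case Nil then show ?case by (cases v) auto
next
  case (Cons a u) then show ?case by (cases v) auto
qed



lemma lyndon_alt: "lyndon (w::'a::linorder list) \<longleftrightarrow> w \<noteq> [] \<and> (\<forall>x y. w = x @ y \<longrightarrow> x \<noteq> [] \<longrightarrow> y \<noteq> [] \<longrightarrow> w < y)"
proof
  assume L: "lyndon w"
  show "w \<noteq> [] \<and> (\<forall>x y. w = x @ y \<longrightarrow> x \<noteq> [] \<longrightarrow> y \<noteq> [] \<longrightarrow> w < y)"
  proof (intro conjI allI impI)
    show "w \<noteq> []" using L by (simp add: lyndon_def)
    fix x y assume H: "w = x @ y" "x \<noteq> []" "y \<noteq> []"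
    then have "w < drop (length x) w" using L by (auto simp: lyndon_def wlt_iff)
    then show "w < y" using H by simp
  qed
next
  assume H: "w \<noteq> [] \<and> (\<forall>x y. w = x @ y \<longrightarrow> x \<noteq> [] \<longrightarrow> y \<noteq> [] \<longrightarrow> w < y)"
  show "lyndon w" unfolding lyndon_def wlt_iff
  proof (intro conjI allI impI)
    show "w \<noteq> []" using H by simp
    fix k assume k: "0 < k \<and> k < length w"
    have "w = take k w @ drop k w" by simp
    moreover have "take k w \<noteq> []" "drop k w \<noteq> []" using k by auto
    ultimately show "w < drop k w" using H by blast
  qed
qed

lemma lyndon_suffix: "lyndon (x @ y) \<Longrightarrow> x \<noteq> [] \<Longrightarrow> y \<noteq> [] \<Longrightarrow> x @ y < (y::'a::linorder list)"
  by (simp add: lyndon_alt)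

lemma lyndon_nonempty: "lyndon w \<Longrightarrow> w \<noteq> []"
  by (simp add: lyndon_def)

lemma lyndon_single[simp]: "lyndon [a::'a::linorder]"
  by (auto simp: lyndon_alt Cons_eq_append_conv)

lemma lyndon_append:
  fixes u v :: "'a::linorder list"
  assumes u: "lyndon u" and v: "lyndon v" and uv: "u < v"
  shows "lyndon (u @ v)"
proof -
  have une: "u \<noteq> []" and vne: "v \<noteq> []" using u v lyndon_nonempty by auto
  have main: "u @ v < v"
  proof (cases "\<exists>z. v = u @ z")
    case True
    then obtain z where z: "v = u @ z" by blast
    then have "z \<noteq> []" using uv by auto
    then have "v < z" using z v une lyndon_suffix by blast
    then have "u @ v < u @ z" by simp
    then show ?thesis using z by simp
  next
    case False
    then have "u @ v < v @ []" using less_append_both uv by blast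
    then show ?thesis by simp
  qed
  show ?thesis unfolding lyndon_alt
  proof (intro conjI allI impI)
    show "u @ v \<noteq> []" using une by simp
    fix x y assume xy: "u @ v = x @ y" "x \<noteq> []" "y \<noteq> []"
    from xy(1) obtain m where "(u = x @ m \<and> m @ v = y) \<or> (x = u @ m \<and> v = m @ y)"
      by (auto simp: append_eq_append_conv2)
    then show "u @ v < y"
    proof
      assume A: "u = x @ m \<and> m @ v = y"
      show ?thesis
      proof (cases "m = []")
        case True then show ?thesis using A main by simp
      next
        case False
        then have "u < m" using A u xy(2) lyndon_suffix by blast
        moreover have "\<not> (\<exists>z. m = u @ z)"
        proof
          assume "\<exists>z. m = u @ z"
          then have "length u \<le> length m" by auto
          then show False using A xy(2) by simp
        qed
        ultimately show ?thesis using less_append_both A by blast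
      qed
    next
      assume A: "x = u @ m \<and> v = m @ y"
      show ?thesis
      proof (cases "m = []")
        case True then show ?thesis using A main by simp
      next
        case False
        then have "v < y" using A v xy(3) lyndon_suffix by blast
        then show ?thesis using main by simp
      qed
    qed
  qed
qed



lemma lf_def2: "lyndon_factorization w fs \<longleftrightarrow>
     concat fs = w \<and> (\<forall>f\<in>set fs. lyndon f) \<and> sorted_wrt (\<lambda>x y. y \<le> x) fs"
  by (simp add: lyndon_factorization_def wle_iff)

lemma split_prefix:
  "q \<noteq> [] \<Longrightarrow> concat gs = q @ t \<Longrightarrow>
   \<exists>k x y p. k < length gs \<and> x \<noteq> [] \<and> gs ! k = x @ y \<and> q = p @ x"
proof (induct gs arbitrary: q t)
  case Nil then show ?case by simp
next
  case (Cons g gs)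
  then have e: "g @ concat gs = q @ t" by simp
  then obtain m where m: "(g = q @ m \<and> m @ concat gs = t) \<or> (q = g @ m \<and> concat gs = m @ t)"
    by (auto simp: append_eq_append_conv2)
  then show ?case
  proof
    assume "g = q @ m \<and> m @ concat gs = t"
    then show ?thesis using Cons.prems by (intro exI[of _ 0] exI[of _ q] exI[of _ m] exI[of _ "[]"]) auto
  next
    assume A: "q = g @ m \<and> concat gs = m @ t"
    show ?thesis
    proof (cases "m = []")
      case True
      then show ?thesis using A Cons.prems by (intro exI[of _ 0] exI[of _ g] exI[of _ "[]"] exI[of _ "[]"]) auto
    next
      case False
      from Cons.hyps[OF False] A obtain k x y p where "k < length gs" "x \<noteq> []" "gs ! k = x @ y" "m = p @ x"
        by blast
      then show ?thesis using A by (intro exI[of _ "Suc k"] exI[of _ x] exI[of _ y] exI[of _ "g @ p"]) auto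
    qed
  qed
qed

lemma longest_lyndon_prefix:
  fixes w :: "'a::linorder list"
  assumes F: "lyndon_factorization w (f # fs)" and p: "lyndon p" and wp: "w = p @ t"
  shows "length p \<le> length f"
proof (rule ccontr)
  assume "\<not> length p \<le> length f"
  then have len: "length f < length p" by simp
  from F have w: "w = f @ concat fs" and Lf: "lyndon f" and srt: "\<forall>g\<in>set fs. g \<le> f"
    by (auto simp: lf_def2)
  from w wp have "f @ concat fs = p @ t" by simp
  then obtain m where "(f = p @ m \<and> m @ concat fs = t) \<or> (p = f @ m \<and> concat fs = m @ t)"
    by (auto simp: append_eq_append_conv2)
  moreover have "\<not> (f = p @ m)" using len by auto
  ultimately have q: "p = f @ m" "concat fs = m @ t" by auto
  then have "m \<noteq> []" using len by auto
  note q = q this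
  from split_prefix[OF q(3) q(2)] obtain k x y p' where
    kx: "k < length fs" "x \<noteq> []" "fs ! k = x @ y" "m = p' @ x" by blast
  have "p = (f @ p') @ x" using q kx by simp
  moreover have "f @ p' \<noteq> []" using Lf lyndon_nonempty by auto
  ultimately have "p < x" using p kx(2) lyndon_suffix by metis
  also have "x \<le> fs ! k" using kx(3) le_append_right by simp
  also have "fs ! k \<le> f" using srt kx(1) by simp
  also have "f \<le> p" using q le_append_right by simp
  finally show False by simp
qed

lemma lf_unique:
  "lyndon_factorization (w::'a::linorder list) fs \<Longrightarrow> lyndon_factorization w gs \<Longrightarrow> fs = gs"
proof (induct fs arbitrary: w gs)
  case Nil
  then have "w = []" by (simp add: lf_def2)
  then show ?case using Nil.prems(2)
    by (cases gs) (auto simp: lf_def2 dest: lyndon_nonempty)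
next
  case (Cons f fs)
  then have w: "w = f @ concat fs" by (simp add: lf_def2)
  then have "w \<noteq> []" using Cons.prems by (auto simp: lf_def2 dest: lyndon_nonempty)
  then obtain g gs' where gs: "gs = g # gs'" using Cons.prems(2) by (cases gs) (auto simp: lf_def2)
  then have w2: "w = g @ concat gs'" using Cons.prems(2) by (simp add: lf_def2)
  have "length g \<le> length f"
    using longest_lyndon_prefix[OF Cons.prems(1), of g] Cons.prems(2) gs w2 by (auto simp: lf_def2)
  moreover have "length f \<le> length g"
    using longest_lyndon_prefix[of w g gs' f] Cons.prems gs w by (auto simp: lf_def2)
  ultimately have "f = g" using w w2 by (metis append_eq_append_conv le_antisym)
  then have "lyndon_factorization (concat fs) fs" "lyndon_factorization (concat fs) gs'"
    using Cons.prems gs w w2 by (auto simp: lf_def2)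
  then show ?case using Cons.hyps \<open>f = g\<close> gs by blast
qed

lemma LF_eq: "lyndon_factorization (w::'a::linorder list) fs \<Longrightarrow> LF w = fs"
  unfolding LF_def using lf_unique by blast

fun ins :: "'a::linorder list \<Rightarrow> 'a list list \<Rightarrow> 'a list list" where
  "ins x [] = [x]"
| "ins x (f # fs) = (if x < f then ins (x @ f) fs else x # f # fs)"

lemma ins_lf: "lyndon x \<Longrightarrow> lyndon_factorization w fs \<Longrightarrow> lyndon_factorization (x @ w) (ins x fs)"
proof (induct x fs arbitrary: w rule: ins.induct)
  case (1 x)
  then show ?case by (simp add: lf_def2)
next
  case (2 x f fs)
  show ?case
  proof (cases "x < f")
    case True
    have "lyndon (x @ f)" using 2 True lyndon_append by (auto simp: lf_def2)
    moreover have "lyndon_factorization (concat fs) fs" using "2.prems" by (auto simp: lf_def2)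
    ultimately have "lyndon_factorization ((x @ f) @ concat fs) (ins (x @ f) fs)"
      using "2.hyps" True by blast
    then show ?thesis using True "2.prems" by (simp add: lf_def2)
  next
    case False
    then have "f \<le> x" by simp
    then show ?thesis using False "2.prems" by (auto simp: lf_def2 intro: order_trans)
  qed
qed

lemma lf_exists: "lyndon_factorization (w::'a::linorder list) (LF w)"
proof (induct w)
  case Nil
  have "lyndon_factorization [] ([]::'a list list)" by (simp add: lf_def2)
  then show ?case using LF_eq by metis
next
  case (Cons a w)
  have "lyndon_factorization ([a] @ w) (ins [a] (LF w))" by (rule ins_lf) (use Cons in auto)
  then show ?case using LF_eq by fastforce
qed

lemma LF_props: "concat (LF w) = (w::'a::linorder list)" "f \<in> set (LF w) \<Longrightarrow> lyndon f"
  "sorted_wrt (\<lambda>x y. y \<le> x) (LF w)"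
  using lf_exists[of w] by (auto simp: lf_def2)



lemma msuf_def2: "min_proper_suffix l s \<longleftrightarrow> (\<exists>k. 0 < k \<and> k < length l \<and> s = drop k l) \<and>
     (\<forall>k. 0 < k \<and> k < length l \<longrightarrow> s \<le> drop k (l::'a::linorder list))"
  by (simp add: min_proper_suffix_def wle_iff)

lemma msuf_exists: "2 \<le> length (l::'a::linorder list) \<Longrightarrow> \<exists>s. min_proper_suffix l s"
proof -
  assume "2 \<le> length l"
  let ?S = "(\<lambda>k. drop k l) ` {1..<length l}"
  have fin: "finite ?S" and ne: "?S \<noteq> {}" using \<open>2 \<le> length l\<close> by auto
  have "Min ?S \<in> ?S" using Min_in[OF fin ne] .
  then obtain k0 where k0: "k0 \<in> {1..<length l}" "Min ?S = drop k0 l" by blast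
  have "\<exists>k. 0 < k \<and> k < length l \<and> Min ?S = drop k l" using k0 by (intro exI[of _ k0]) auto
  moreover have "\<forall>k. 0 < k \<and> k < length l \<longrightarrow> Min ?S \<le> drop k l"
    using fin by (auto intro: Min_le)
  ultimately show ?thesis unfolding msuf_def2 by (intro exI[of _ "Min ?S"]) auto
qed

lemma msuf_split: "min_proper_suffix l s \<Longrightarrow> \<exists>r. l = r @ s \<and> r \<noteq> [] \<and> s \<noteq> []"
  unfolding msuf_def2
proof (elim conjE exE)
  fix k assume k: "0 < k" "k < length l" "s = drop k l"
  show ?thesis using k by (intro exI[of _ "take k l"]) auto
qed

lemma msuf_le: "min_proper_suffix (l::'a::linorder list) s \<Longrightarrow> l = x @ y \<Longrightarrow> x \<noteq> [] \<Longrightarrow> y \<noteq> [] \<Longrightarrow> s \<le> y"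
  unfolding msuf_def2
proof (elim conjE)
  assume H: "\<forall>k. 0 < k \<and> k < length l \<longrightarrow> s \<le> drop k l" "l = x @ y" "x \<noteq> []" "y \<noteq> []"
  then have "s \<le> drop (length x) l" by auto
  then show "s \<le> y" using H by simp
qed

lemma msuf_intro: "l = (r::'a::linorder list) @ s \<Longrightarrow> r \<noteq> [] \<Longrightarrow> s \<noteq> [] \<Longrightarrow>
   (\<And>x y. l = x @ y \<Longrightarrow> x \<noteq> [] \<Longrightarrow> y \<noteq> [] \<Longrightarrow> s \<le> y) \<Longrightarrow> min_proper_suffix l s"
  unfolding msuf_def2
proof (intro conjI allI impI)
  assume H: "l = r @ s" "r \<noteq> []" "s \<noteq> []" "\<And>x y. l = x @ y \<Longrightarrow> x \<noteq> [] \<Longrightarrow> y \<noteq> [] \<Longrightarrow> s \<le> y"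
  show "\<exists>k>0. k < length l \<and> s = drop k l" using H by (intro exI[of _ "length r"]) auto
  fix k assume k: "0 < k \<and> k < length l"
  have "take k l \<noteq> []" "drop k l \<noteq> []" "l = take k l @ drop k l" using k by auto
  then show "s \<le> drop k l" using H(4) by blast
qed

lemma msuf_lyndon: "min_proper_suffix (l::'a::linorder list) s \<Longrightarrow> lyndon s"
proof -
  assume m: "min_proper_suffix l s"
  then obtain r where r: "l = r @ s" "r \<noteq> []" "s \<noteq> []" using msuf_split by blast
  show "lyndon s" unfolding lyndon_alt
  proof (intro conjI allI impI)
    show "s \<noteq> []" by fact
    fix x y assume xy: "s = x @ y" "x \<noteq> []" "y \<noteq> []"
    have "s \<le> y" using msuf_le[OF m, of "r @ x" y] r xy by simp
    moreover have "s \<noteq> y" using xy by auto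
    ultimately show "s < y" by simp
  qed
qed

lemma msuf_std: "min_proper_suffix (l::'a::linorder list) s \<Longrightarrow> l = r @ s \<Longrightarrow> std_fact l r s"
proof -
  assume m: "min_proper_suffix l s" and lr: "l = r @ s"
  obtain r' where r': "l = r' @ s" "r' \<noteq> []" "s \<noteq> []" using msuf_split[OF m] by blast
  have "r = r'" using lr r' by simp
  show ?thesis unfolding std_fact_def
  proof (intro conjI allI impI)
    show "l = r @ s" "r \<noteq> []" using lr r' \<open>r = r'\<close> by auto
    show "lyndon s" using msuf_lyndon[OF m] .
    fix k assume k: "0 < k \<and> k < length l \<and> lyndon (drop k l)"
    show "length (drop k l) \<le> length s"
    proof (rule ccontr)
      assume "\<not> length (drop k l) \<le> length s"
      have d: "drop (length (drop k l) - length s) (drop k l) = s"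
        using lr \<open>\<not> length (drop k l) \<le> length s\<close> by (simp add: add.commute)
      then have "drop k l = take (length (drop k l) - length s) (drop k l) @ s"
        by (metis append_take_drop_id)
      moreover have "take (length (drop k l) - length s) (drop k l) \<noteq> []"
        using \<open>\<not> length (drop k l) \<le> length s\<close> by (simp, arith)
      ultimately have "drop k l < s" using k r'(3) lyndon_suffix by metis
      moreover have "s \<le> drop k l" using m k by (simp add: msuf_def2)
      ultimately show False by simp
    qed
  qed
qed

lemma std_msuf: "std_fact (l::'a::linorder list) r s \<Longrightarrow> min_proper_suffix l s"
proof -
  assume st: "std_fact l r s"
  then have lrs: "l = r @ s" "r \<noteq> []" "lyndon s" by (auto simp: std_fact_def)
  then have sne: "s \<noteq> []" using lyndon_nonempty by blast
  then have "2 \<le> length l" using lrs by (cases r; cases s) auto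
  then obtain m where m: "min_proper_suffix l m" using msuf_exists by blast
  obtain r' where r': "l = r' @ m" "r' \<noteq> []" "m \<noteq> []" using msuf_split[OF m] by blast
  have st': "std_fact l r' m" using msuf_std[OF m r'(1)] .
  have "drop (length r') l = m" using r' by simp
  moreover have "0 < length r'" "length r' < length l" using r' by auto
  ultimately have A1: "length m \<le> length s" using st msuf_lyndon[OF m] unfolding std_fact_def by metis
  have "drop (length r) l = s" using lrs by simp
  moreover have "0 < length r" "length r < length l" using lrs sne by auto
  ultimately have "length s \<le> length m" using st' lrs unfolding std_fact_def by metis
  then have "length s = length m" using A1 by simp
  then have "s = m" using lrs r' by (metis append_eq_append_conv)
  then show ?thesis using m by simp
qed

lemma std_iff_msuf: "l = r @ s \<Longrightarrow> std_fact (l::'a::linorder list) r s \<longleftrightarrow> min_proper_suffix l s"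
  using std_msuf msuf_std by blast

lemma std_left_lyndon:
  fixes l r s :: "'a::linorder list"
  assumes L: "lyndon l" and m: "min_proper_suffix l s" and lr: "l = r @ s"
  shows "lyndon r"
proof -
  obtain r' where r': "l = r' @ s" "r' \<noteq> []" "s \<noteq> []" using msuf_split[OF m] by blast
  then have rne: "r \<noteq> []" using lr by simp
  show ?thesis unfolding lyndon_alt
  proof (intro conjI allI impI)
    show "r \<noteq> []" by fact
    fix x y assume xy: "r = x @ y" "x \<noteq> []" "y \<noteq> []"
    show "r < y"
    proof (rule ccontr)
      assume "\<not> r < y"
      then have yr: "y \<le> r" by simp
      have ly: "l < y @ s" using lyndon_suffix[of x "y @ s"] L lr xy by simp
      show False
      proof (cases "\<exists>t. r = y @ t")
        case True
        then obtain t where t: "r = y @ t" by blast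
        then have "t \<noteq> []" using xy by (cases t) auto
        have "y @ t @ s < y @ s" using ly lr t by simp
        then have "t @ s < s" by simp
        moreover have "s \<le> t @ s" using msuf_le[OF m, of y "t @ s"] lr xy t \<open>t \<noteq> []\<close>
          by simp
        ultimately show False by simp
      next
        case False
        have "y \<noteq> r" using xy by auto
        then have "y < r" using yr by simp
        then have "y @ s < r @ s" using less_append_both False by blast
        then show False using ly lr by simp
      qed
    qed
  qed
qed

lemma std_mono:
  fixes l r s r' s' :: "'a::linorder list"
  assumes m: "min_proper_suffix l s" and lr: "l = r @ s"
    and m': "min_proper_suffix r s'" and rr: "r = r' @ s'"
  shows "s \<le> s'"
proof (rule ccontr)
  assume "\<not> s \<le> s'"
  then have "s' < s" by simp
  then have Ly: "lyndon (s' @ s)" using lyndon_append msuf_lyndon m m' by blast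
  obtain q where q: "r = q @ s'" "q \<noteq> []" "s' \<noteq> []" using msuf_split[OF m'] by blast
  have st: "std_fact l r s" using msuf_std[OF m lr] .
  have "drop (length q) l = s' @ s" using q lr by simp
  moreover have "0 < length q" "length q < length l" using q lr by auto
  ultimately have "length (s' @ s) \<le> length s" using st Ly unfolding std_fact_def by metis
  then show False using q by simp
qed

lemma msuf_append:
  fixes u v :: "'a::linorder list"
  assumes u: "lyndon u" and v: "lyndon v" and uv: "u < v"
    and c: "length u = 1 \<or> (\<forall>s'. min_proper_suffix u s' \<longrightarrow> v \<le> s')"
  shows "min_proper_suffix (u @ v) v"
proof (rule msuf_intro[of _ u v])
  show "u \<noteq> []" "v \<noteq> []" using u v lyndon_nonempty by auto
  fix x y assume xy: "u @ v = x @ y" "x \<noteq> []" "y \<noteq> []"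
  from xy(1) obtain m where "(u = x @ m \<and> m @ v = y) \<or> (x = u @ m \<and> v = m @ y)"
    by (auto simp: append_eq_append_conv2)
  then show "v \<le> y"
  proof
    assume A: "u = x @ m \<and> m @ v = y"
    show ?thesis
    proof (cases "m = []")
      case True then show ?thesis using A by simp
    next
      case False
      then have "2 \<le> length u" using A xy(2) by (cases x; cases m) auto
      then obtain s' where s': "min_proper_suffix u s'" using msuf_exists by blast
      then have "v \<le> s'" using c \<open>2 \<le> length u\<close> by auto
      also have "s' \<le> m" using msuf_le[OF s'] A xy(2) False by blast
      also have "m \<le> m @ v" by (rule le_append_right)
      finally show ?thesis using A by simp
    qed
  next
    assume A: "x = u @ m \<and> v = m @ y"
    show ?thesis
    proof (cases "m = []")
      case True then show ?thesis using A by simp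
    next
      case False
      then show ?thesis using A v xy(3) lyndon_suffix by fastforce
    qed
  qed
qed simp



lemma msuf_unique: "min_proper_suffix (l::'a::linorder list) s \<Longrightarrow> min_proper_suffix l s' \<Longrightarrow> s = s'"
  unfolding msuf_def2 by (metis order_antisym)

lemma gt_append: "lyndon (p::'a::linorder list) \<Longrightarrow> u \<noteq> [] \<Longrightarrow> u < p \<Longrightarrow> e < p \<Longrightarrow> u @ e < p"
proof -
  assume p: "lyndon p" and u: "u \<noteq> []" "u < p" and e: "e < p"
  show ?thesis
  proof (cases "\<exists>z. p = u @ z")
    case True
    then obtain z where z: "p = u @ z" by blast
    then have "z \<noteq> []" using u by auto
    then have "p < z" using p z u lyndon_suffix by blast
    then have "e < z" using e by simp
    then show ?thesis using z by simp
  next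
    case False
    then have "u @ e < p @ []" using less_append_both u by blast
    then show ?thesis by simp
  qed
qed

lemma sorted_le_last: "sorted_wrt (\<lambda>x y. y \<le> x) (xs::'a::linorder list) \<Longrightarrow> x \<in> set xs \<Longrightarrow> last xs \<le> x"
proof (induct xs)
  case Nil then show ?case by simp
next
  case (Cons a xs) then show ?case by (cases "xs = []") (auto intro: order_trans)
qed

lemma sorted_le_hd: "sorted_wrt (\<lambda>x y. y \<le> x) (xs::'a::linorder list) \<Longrightarrow> x \<in> set xs \<Longrightarrow> x \<le> hd xs"
  by (cases xs) auto

lemma sorted_lt_last: "sorted_wrt (\<lambda>x y. y < x) (xs::'a::linorder list) \<Longrightarrow> x \<in> set xs \<Longrightarrow> last xs \<le> x"
proof (induct xs)
  case Nil then show ?case by simp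
next
  case (Cons a xs) then show ?case by (cases "xs = []") (auto intro: order_trans less_imp_le)
qed

definition chain :: "'a::linorder list \<Rightarrow> 'a list list \<Rightarrow> 'a list \<Rightarrow> bool" where
  "chain r ts l \<longleftrightarrow> ts \<noteq> [] \<and> l = r @ concat ts \<and>
     (\<forall>i<length ts. min_proper_suffix (r @ concat (take (Suc i) ts)) (ts ! i))"

lemma chain_facts:
  "chain r ts l \<Longrightarrow> lyndon l \<Longrightarrow>
    lyndon (r @ hd ts) \<and> min_proper_suffix (r @ hd ts) (hd ts) \<and> sorted_wrt (\<lambda>x y. y \<le> x) ts
    \<and> (\<forall>t\<in>set ts. lyndon t) \<and> l < last ts \<and> r \<noteq> []"
proof (induct ts arbitrary: l rule: rev_induct)
  case Nil then show ?case by (simp add: chain_def)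
next
  case (snoc s ts)
  have l: "l = (r @ concat ts) @ s" using snoc.prems by (simp add: chain_def)
  have ms: "min_proper_suffix l s"
    using snoc.prems(1) unfolding chain_def by (auto dest!: spec[of _ "length ts"] simp: l)
  obtain q where q: "l = q @ s" "q \<noteq> []" "s \<noteq> []" using msuf_split[OF ms] by blast
  have ls: "l < s" using lyndon_suffix q snoc.prems(2) by blast
  show ?case
  proof (cases "ts = []")
    case True
    then show ?thesis using l ms ls q snoc.prems(2) msuf_lyndon[OF ms] by auto
  next
    case False
    let ?l' = "r @ concat ts"
    have L': "lyndon ?l'" using std_left_lyndon[OF snoc.prems(2) ms l] .
    have ch: "chain r ts ?l'" unfolding chain_def
    proof (intro conjI allI impI)
      show "ts \<noteq> []" by fact
      show "?l' = r @ concat ts" by simp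
      fix i assume i: "i < length ts"
      have "min_proper_suffix (r @ concat (take (Suc i) (ts @ [s]))) ((ts @ [s]) ! i)"
        using snoc.prems(1) i unfolding chain_def
        by (metis (no_types, lifting) length_append_singleton less_SucI)
      moreover have "take (Suc i) (ts @ [s]) = take (Suc i) ts" using i by simp
      ultimately show "min_proper_suffix (r @ concat (take (Suc i) ts)) (ts ! i)"
        using i by (simp add: nth_append)
    qed
    note IH = snoc.hyps[OF ch L']
    have ms': "min_proper_suffix ?l' (last ts)"
    proof -
      have "min_proper_suffix (r @ concat (take (Suc (length ts - 1)) ts)) (ts ! (length ts - 1))"
      proof -
        have "length ts - 1 < length ts" using False by simp
        then show ?thesis using ch unfolding chain_def by blast
      qed
      then show ?thesis using False by (simp add: last_conv_nth)
    qed
    have "ts = butlast ts @ [last ts]" using False by simp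
    then have "concat ts = concat (butlast ts) @ last ts" by (metis concat_append concat.simps(2) append_Nil2 concat.simps(1))
    then have "?l' = (r @ concat (butlast ts)) @ last ts" by simp
    then have "s \<le> last ts" using std_mono[OF ms l ms'] by blast
    then have "\<forall>x\<in>set ts. s \<le> x" using IH sorted_le_last order_trans by blast
    then show ?thesis using IH False ls msuf_lyndon[OF ms] by (auto simp: sorted_wrt_append)
  qed
qed

lemma isf_chain: "is_ISF u l r ts \<Longrightarrow> chain r ts l"
  by (simp add: is_ISF_def chain_def)



definition Inv :: "'a::linorder list \<Rightarrow> 'a list \<Rightarrow> bool" where
 "Inv Ow Ew \<longleftrightarrow> (\<forall>f\<in>set (LF Ow). odd (length f)) \<and> sorted_wrt (\<lambda>x y. y < x) (LF Ow) \<and>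
   (\<forall>f\<in>set (LF Ew). even (length f)) \<and>
   (Ew \<noteq> [] \<longrightarrow> 2 \<le> length (LF Ow) \<longrightarrow> hd (LF Ew) < LF Ow ! (length (LF Ow) - 2)) \<and>
   (Ew \<noteq> [] \<longrightarrow> LF Ow \<noteq> [] \<longrightarrow> (\<forall>s. min_proper_suffix (last (LF Ow)) s \<longrightarrow> hd (LF Ew) \<le> s))"

lemma psi_S:
  assumes "LF O2 = fs0 @ [om]" "2 \<le> length O2" "std_fact om r s"
    "w_lt_ext s (if fs0 = [] then None else Some (last fs0))" "2 \<le> length om"
    "odd (length r)" "O1 = concat fs0 @ r" "E1 = s @ E2"
  shows "psi_step (O2, E2) (O1, E1)"
proof -
  have sp: "splittable (if fs0 = [] then None else Some (last fs0)) om"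
    using assms unfolding splittable_def by blast
  have "(if length (fs0 @ [om]) = 1 then None else Some ((fs0 @ [om]) ! (length (fs0 @ [om]) - 2)))
        = (if fs0 = [] then None else Some (last fs0))"
    by (cases fs0 rule: rev_cases) (auto simp: nth_append)
  then show ?thesis using assms sp unfolding psi_step_def Let_def by auto
qed

lemma psi_P:
  assumes "LF O2 = fs0 @ [om]" "2 \<le> length O2" "std_fact om r s"
    "w_lt_ext s (if fs0 = [] then None else Some (last fs0))" "2 \<le> length om"
    "even (length r)" "O1 = concat fs0 @ s" "E1 = r @ E2"
  shows "psi_step (O2, E2) (O1, E1)"
proof -
  have sp: "splittable (if fs0 = [] then None else Some (last fs0)) om"
    using assms unfolding splittable_def by blast
  have "(if length (fs0 @ [om]) = 1 then None else Some ((fs0 @ [om]) ! (length (fs0 @ [om]) - 2)))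
        = (if fs0 = [] then None else Some (last fs0))"
    by (cases fs0 rule: rev_cases) (auto simp: nth_append)
  then show ?thesis using assms sp unfolding psi_step_def Let_def by auto
qed

lemma psi_F:
  assumes "LF O2 = fs0 @ [p, om]" "2 \<le> length O2" "\<not> splittable (Some p) om"
    "O1 = concat fs0" "E1 = om @ p @ E2"
  shows "psi_step (O2, E2) (O1, E1)"
proof -
  have "(fs0 @ [p, om]) ! (length (fs0 @ [p, om]) - 2) = p" by (simp add: nth_append)
  moreover have "take (length (fs0 @ [p, om]) - 2) (fs0 @ [p, om]) = fs0" by simp
  ultimately show ?thesis using assms unfolding psi_step_def Let_def by auto
qed

lemma even_concat: "\<forall>t\<in>set xs. even (length t) \<Longrightarrow> even (length (concat xs))"
  by (induct xs) auto

lemma set_tl_nth: "t \<in> set (tl ts) \<Longrightarrow> \<exists>i. 0 < i \<and> i < length ts \<and> t = ts ! i"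
  by (cases ts) (auto simp: in_set_conv_nth)

lemma Inv_basic:
  assumes I: "Inv Ow Ew" and es: "LF Ew = e1 # es'"
  shows "Ew = e1 @ concat es'" "lyndon e1" "\<forall>y\<in>set es'. lyndon y" "even (length e1)"
    "\<forall>y\<in>set es'. even (length y)" "\<forall>y\<in>set es'. y \<le> e1" "sorted_wrt (\<lambda>x y. y \<le> x) es'"
    "2 \<le> length e1"
proof -
  show Ew: "Ew = e1 @ concat es'" using LF_props(1)[of Ew] es by simp
  show "lyndon e1" "\<forall>y\<in>set es'. lyndon y" using LF_props(2)[of _ Ew] es by auto
  show ev: "even (length e1)" "\<forall>y\<in>set es'. even (length y)" using I es by (auto simp: Inv_def)
  show "\<forall>y\<in>set es'. y \<le> e1" "sorted_wrt (\<lambda>x y. y \<le> x) es'" using LF_props(3)[of Ew] es by auto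
  have "e1 \<noteq> []" using \<open>lyndon e1\<close> lyndon_nonempty by blast
  then have "length e1 \<noteq> 0" by simp
  moreover have "length e1 \<noteq> 1" using ev(1) by auto
  ultimately show "2 \<le> length e1" by linarith
qed

lemma Inv_O:
  assumes I: "Inv Ow Ew" and os: "LF Ow = os0 @ [oh]"
  shows "Ow = concat os0 @ oh" "lyndon oh" "\<forall>x\<in>set os0. lyndon x" "odd (length oh)"
    "\<forall>x\<in>set os0. odd (length x)" "\<forall>x\<in>set os0. oh < x" "sorted_wrt (\<lambda>x y. y < x) os0"
    "os0 \<noteq> [] \<Longrightarrow> \<forall>x\<in>set os0. last os0 \<le> x"
proof -
  show "Ow = concat os0 @ oh" using LF_props(1)[of Ow] os by simp
  show "lyndon oh" "\<forall>x\<in>set os0. lyndon x" using LF_props(2)[of _ Ow] os by auto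
  show "odd (length oh)" "\<forall>x\<in>set os0. odd (length x)" using I os by (auto simp: Inv_def)
  have s: "sorted_wrt (\<lambda>x y. y < x) (os0 @ [oh])" using I os by (simp add: Inv_def)
  then show "\<forall>x\<in>set os0. oh < x" "sorted_wrt (\<lambda>x y. y < x) os0" by (auto simp: sorted_wrt_append)
  then show "os0 \<noteq> [] \<Longrightarrow> \<forall>x\<in>set os0. last os0 \<le> x" using sorted_lt_last by blast
qed

lemma Inv_prev:
  assumes I: "Inv Ow Ew" and os: "LF Ow = os0 @ [oh]" and es: "LF Ew = e1 # es'" and ne: "os0 \<noteq> []"
  shows "e1 < last os0"
proof -
  have "Ew \<noteq> []" using Inv_basic[OF I es] by auto
  moreover have "2 \<le> length (LF Ow)" using os ne by (cases os0) auto
  moreover have "LF Ow ! (length (LF Ow) - 2) = last os0" using os ne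
    by (cases os0 rule: rev_cases) (auto simp: nth_append)
  ultimately show ?thesis using I es by (simp add: Inv_def)
qed

lemma Inv_last:
  assumes I: "Inv Ow Ew" and os: "LF Ow = os0 @ [oh]" and es: "LF Ew = e1 # es'"
  shows "\<forall>s. min_proper_suffix oh s \<longrightarrow> e1 \<le> s"
proof -
  have "Ew \<noteq> []" using Inv_basic[OF I es] by auto
  then show ?thesis using I es os by (simp add: Inv_def)
qed

lemma sorted_strict_le: "sorted_wrt (\<lambda>x y. y < x) xs \<Longrightarrow> sorted_wrt (\<lambda>x y. y \<le> (x::'a::linorder list)) xs"
  by (rule sorted_wrt_mono_rel[of _ "\<lambda>x y. y < x"]) auto

lemma LF_intro: "concat fs = w \<Longrightarrow> \<forall>f\<in>set fs. lyndon f \<Longrightarrow> sorted_wrt (\<lambda>x y. y \<le> x) fs \<Longrightarrow> LF w = (fs::'a::linorder list list)"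
  using LF_eq lf_def2 by blast

lemma Inv_intro:
  assumes "LF Ow = os" "LF Ew = es" "\<forall>f\<in>set os. odd (length f)" "sorted_wrt (\<lambda>x y. y < x) os"
   "\<forall>f\<in>set es. even (length f)"
   "Ew \<noteq> [] \<Longrightarrow> 2 \<le> length os \<Longrightarrow> hd es < os ! (length os - 2)"
   "Ew \<noteq> [] \<Longrightarrow> os \<noteq> [] \<Longrightarrow> \<forall>s. min_proper_suffix (last os) s \<longrightarrow> hd es \<le> s"
  shows "Inv Ow Ew"
  using assms unfolding Inv_def by auto



lemma len2: "even (length (x::'a list)) \<Longrightarrow> x \<noteq> [] \<Longrightarrow> 2 \<le> length x"
proof -
  assume "even (length x)" "x \<noteq> []"
  then have "length x \<noteq> 0" "length x \<noteq> 1" by auto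
  then show ?thesis by linarith
qed

lemma case_S:
  fixes Ow Ew :: "'a::linorder list"
  assumes I: "Inv Ow Ew" and es: "LF Ew = e1 # es'" and os: "LF Ow = os0 @ [oh]" and lt: "oh < e1"
  shows "psi_step (Ow @ e1, concat es') (Ow, Ew) \<and> Inv (Ow @ e1) (concat es')"
proof -
  note B = Inv_basic[OF I es] and C = Inv_O[OF I os]
  have prev: "os0 \<noteq> [] \<Longrightarrow> e1 < last os0" using Inv_prev[OF I os es] .
  have ms: "min_proper_suffix (oh @ e1) e1"
    using msuf_append[OF C(2) B(2) lt] Inv_last[OF I os es] by blast
  have L: "lyndon (oh @ e1)" using lyndon_append[OF C(2) B(2) lt] .
  have ohne: "oh \<noteq> []" using C(2) lyndon_nonempty by blast
  have gt: "os0 \<noteq> [] \<Longrightarrow> oh @ e1 < last os0"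
  proof -
    assume ne: "os0 \<noteq> []"
    have "last os0 \<in> set os0" using ne by simp
    then have "lyndon (last os0)" "oh < last os0" using C by auto
    then show ?thesis using gt_append ohne prev[OF ne] by blast
  qed
  have strict: "sorted_wrt (\<lambda>x y. y < x) (os0 @ [oh @ e1])"
  proof -
    have "\<forall>x\<in>set os0. oh @ e1 < x"
    proof
      fix x assume x: "x \<in> set os0"
      then have ne: "os0 \<noteq> []" by auto
      then show "oh @ e1 < x" using gt[OF ne] C(8)[OF ne] x by (meson less_le_trans)
    qed
    then show ?thesis using C(7) by (simp add: sorted_wrt_append)
  qed
  have LFO: "LF (Ow @ e1) = os0 @ [oh @ e1]"
    by (rule LF_intro) (use C L strict sorted_strict_le in auto)
  have LFE: "LF (concat es') = es'"
    by (rule LF_intro) (use B in auto)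
  have psi: "psi_step (Ow @ e1, concat es') (Ow, Ew)"
  proof (rule psi_S[OF LFO, of oh e1])
    show "2 \<le> length (Ow @ e1)" "2 \<le> length (oh @ e1)" using B(8) by auto
    show "std_fact (oh @ e1) oh e1" using msuf_std[OF ms] by simp
    show "w_lt_ext e1 (if os0 = [] then None else Some (last os0))" using prev by (auto simp: wlt_iff)
    show "odd (length oh)" by (rule C(4))
    show "Ow = concat os0 @ oh" by (rule C(1))
    show "Ew = e1 @ concat es'" by (rule B(1))
  qed
  have inv: "Inv (Ow @ e1) (concat es')"
  proof (rule Inv_intro[OF LFO LFE])
    show "\<forall>f\<in>set (os0 @ [oh @ e1]). odd (length f)" using C B by auto
    show "sorted_wrt (\<lambda>x y. y < x) (os0 @ [oh @ e1])" by (rule strict)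
    show "\<forall>f\<in>set es'. even (length f)" using B by auto
    assume ne: "concat es' \<noteq> []"
    then have "es' \<noteq> []" by auto
    then have h: "hd es' \<le> e1" using B(6) by simp
    show "2 \<le> length (os0 @ [oh @ e1]) \<Longrightarrow> hd es' < (os0 @ [oh @ e1]) ! (length (os0 @ [oh @ e1]) - 2)"
    proof -
      assume "2 \<le> length (os0 @ [oh @ e1])"
      then have ne0: "os0 \<noteq> []" by auto
      then have "(os0 @ [oh @ e1]) ! (length (os0 @ [oh @ e1]) - 2) = last os0"
        by (cases os0 rule: rev_cases) (auto simp: nth_append)
      then show ?thesis using h prev[OF ne0] by simp
    qed
    show "os0 @ [oh @ e1] \<noteq> [] \<Longrightarrow> \<forall>s. min_proper_suffix (last (os0 @ [oh @ e1])) s \<longrightarrow> hd es' \<le> s"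
      using msuf_unique[OF ms] h by auto
  qed
  show ?thesis using psi inv by blast
qed



lemma isf_facts:
  fixes e1 r :: "'a::linorder list"
  assumes isf: "is_ISF u e1 r ts" and Le: "lyndon e1" and ev: "even (length e1)"
  shows "lyndon (r @ hd ts)" "min_proper_suffix (r @ hd ts) (hd ts)" "sorted_wrt (\<lambda>x y. y \<le> x) ts"
    "\<forall>t\<in>set ts. lyndon t" "e1 < last ts" "r \<noteq> []" "e1 = (r @ hd ts) @ concat (tl ts)"
    "\<forall>t\<in>set (tl ts). even (length t) \<and> w_lt_ext t u" "odd (length (hd ts)) \<or> ext_le_w u (hd ts)"
    "even (length (r @ hd ts))" "ts \<noteq> []" "lyndon r" "r < hd ts" "\<forall>t\<in>set (tl ts). t \<le> hd ts"
    "\<forall>t\<in>set ts. e1 < t"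
proof -
  have ch: "chain r ts e1" using isf_chain[OF isf] .
  have cf: "lyndon (r @ hd ts)" "min_proper_suffix (r @ hd ts) (hd ts)" "sorted_wrt (\<lambda>x y. y \<le> x) ts"
    "\<forall>t\<in>set ts. lyndon t" "e1 < last ts" "r \<noteq> []" using chain_facts[OF ch Le] by blast+
  show "lyndon (r @ hd ts)" "min_proper_suffix (r @ hd ts) (hd ts)" "sorted_wrt (\<lambda>x y. y \<le> x) ts"
    "\<forall>t\<in>set ts. lyndon t" "e1 < last ts" "r \<noteq> []" by (rule cf)+
  have i1: "ts \<noteq> []" "e1 = r @ concat ts" using isf unfolding is_ISF_def by blast+
  have i2: "\<forall>i. 0 < i \<and> i < length ts \<longrightarrow> even (length (ts ! i)) \<and> w_lt_ext (ts ! i) u"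
    using isf unfolding is_ISF_def by blast
  have i3: "odd (length (ts ! 0)) \<or> ext_le_w u (ts ! 0)" using isf unfolding is_ISF_def by blast
  show tsne: "ts \<noteq> []" by (rule i1(1))
  have "ts = hd ts # tl ts" using tsne by simp
  then have "concat ts = hd ts @ concat (tl ts)" by (metis concat.simps(2))
  then show e1: "e1 = (r @ hd ts) @ concat (tl ts)" using i1 by simp
  show tl: "\<forall>t\<in>set (tl ts). even (length t) \<and> w_lt_ext t u"
  proof
    fix t assume "t \<in> set (tl ts)"
    then obtain i where ii: "0 < i" "i < length ts" "t = ts ! i" using set_tl_nth by metis
    then show "even (length t) \<and> w_lt_ext t u" using i2 by simp
  qed
  show "odd (length (hd ts)) \<or> ext_le_w u (hd ts)" using i3 tsne by (simp add: hd_conv_nth)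
  have "\<forall>t\<in>set (tl ts). even (length t)" using tl by simp
  then have "even (length (concat (tl ts)))" by (rule even_concat)
  moreover have "length e1 = length (r @ hd ts) + length (concat (tl ts))"
    using arg_cong[OF e1, of length] by simp
  ultimately show "even (length (r @ hd ts))" using ev by simp
  show "lyndon r" using std_left_lyndon[OF cf(1) cf(2)] by simp
  have "hd ts \<in> set ts" using tsne by simp
  then have hdne: "hd ts \<noteq> []" using cf(4) lyndon_nonempty by blast
  have "r < r @ hd ts" using less_append_right[OF hdne] .
  also have "r @ hd ts < hd ts" using lyndon_suffix[OF cf(1) cf(6) hdne] .
  finally show "r < hd ts" .
  show "\<forall>t\<in>set (tl ts). t \<le> hd ts" using cf(3) tsne by (cases ts) auto
  show "\<forall>t\<in>set ts. e1 < t"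
  proof
    fix t assume "t \<in> set ts"
    then have "last ts \<le> t" using cf(3) sorted_le_last by blast
    then show "e1 < t" using cf(5) by simp
  qed
qed

lemma LF_E2:
  fixes e1 :: "'a::linorder list"
  assumes isf: "is_ISF u e1 r ts" and I: "Inv Ow Ew" and es: "LF Ew = e1 # es'"
  shows "LF (concat (tl ts) @ concat es') = tl ts @ es'"
    "\<forall>f\<in>set (tl ts @ es'). even (length f)"
proof -
  note B = Inv_basic[OF I es]
  note F = isf_facts[OF isf B(2) B(4)]
  show "LF (concat (tl ts) @ concat es') = tl ts @ es'"
  proof (rule LF_intro)
    show "concat (tl ts @ es') = concat (tl ts) @ concat es'" by simp
    show "\<forall>f\<in>set (tl ts @ es'). lyndon f" using F(4) B(3) by (auto dest: list.set_sel(2)[OF F(11)])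
    have "\<forall>x\<in>set (tl ts). \<forall>y\<in>set es'. y \<le> x"
    proof (intro ballI)
      fix x y assume x: "x \<in> set (tl ts)" and y: "y \<in> set es'"
      have "y \<le> e1" using B(6) y by blast
      also have "e1 < x" using F(15) x by (auto dest: list.set_sel(2)[OF F(11)])
      finally show "y \<le> x" by simp
    qed
    moreover have "sorted_wrt (\<lambda>x y. y \<le> x) (tl ts)" using F(3) by (cases ts) auto
    ultimately show "sorted_wrt (\<lambda>x y. y \<le> x) (tl ts @ es')" using B(7) by (simp add: sorted_wrt_append)
  qed
  show "\<forall>f\<in>set (tl ts @ es'). even (length f)" using F(8) B(5) by auto
qed



lemma case_P:
  fixes Ow Ew :: "'a::linorder list"
  assumes I: "Inv Ow Ew" and es: "LF Ew = e1 # es'" and os: "LF Ow = os0 @ [oh]" and nlt: "\<not> oh < e1"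
    and isf: "is_ISF (Some oh) e1 r ts" and le: "oh \<le> hd ts"
  shows "psi_step (concat os0 @ r @ hd ts @ oh, concat (tl ts) @ concat es') (Ow, Ew) \<and>
         Inv (concat os0 @ r @ hd ts @ oh) (concat (tl ts) @ concat es')"
proof -
  note B = Inv_basic[OF I es] and C = Inv_O[OF I os]
  note F = isf_facts[OF isf B(2) B(4)]
  note E2 = LF_E2[OF isf I es]
  have prev: "os0 \<noteq> [] \<Longrightarrow> e1 < last os0" using Inv_prev[OF I os es] .
  define L where "L = r @ hd ts"
  have LL: "lyndon L" "min_proper_suffix L (hd ts)" "even (length L)" "e1 = L @ concat (tl ts)"
    using F unfolding L_def by auto
  have "e1 \<noteq> oh" using B(4) C(4) by auto
  then have e1oh: "e1 < oh" using nlt by simp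
  have Le1: "L \<le> e1" using LL(4) le_append_right by simp
  then have Loh: "L < oh" using e1oh by simp
  have ms: "min_proper_suffix (L @ oh) oh"
  proof (rule msuf_append[OF LL(1) C(2) Loh])
    show "length L = 1 \<or> (\<forall>s'. min_proper_suffix L s' \<longrightarrow> oh \<le> s')"
      using msuf_unique[OF LL(2)] le by auto
  qed
  have Lyn: "lyndon (L @ oh)" using lyndon_append[OF LL(1) C(2) Loh] .
  have Lne: "L \<noteq> []" using LL(1) lyndon_nonempty by blast
  have gt: "os0 \<noteq> [] \<Longrightarrow> L @ oh < last os0"
  proof -
    assume ne: "os0 \<noteq> []"
    have "last os0 \<in> set os0" using ne by simp
    then have "lyndon (last os0)" "oh < last os0" using C by auto
    moreover have "L < last os0" using Le1 prev[OF ne] by simp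
    ultimately show ?thesis using gt_append Lne by blast
  qed
  have strict: "sorted_wrt (\<lambda>x y. y < x) (os0 @ [L @ oh])"
  proof -
    have "\<forall>x\<in>set os0. L @ oh < x"
    proof
      fix x assume x: "x \<in> set os0"
      then have ne: "os0 \<noteq> []" by auto
      then show "L @ oh < x" using gt[OF ne] C(8)[OF ne] x by (meson less_le_trans)
    qed
    then show ?thesis using C(7) by (simp add: sorted_wrt_append)
  qed
  have O2: "concat os0 @ r @ hd ts @ oh = concat os0 @ (L @ oh)" by (simp add: L_def)
  have LFO: "LF (concat os0 @ r @ hd ts @ oh) = os0 @ [L @ oh]"
    unfolding O2 by (rule LF_intro) (use C Lyn strict sorted_strict_le in auto)
  have tlo: "\<forall>t\<in>set (tl ts). even (length t) \<and> t < oh" using F(8) by (simp add: wlt_iff)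
  have hdE: "concat (tl ts) @ concat es' \<noteq> [] \<Longrightarrow> hd (tl ts @ es') < oh"
  proof -
    assume ne: "concat (tl ts) @ concat es' \<noteq> []"
    show ?thesis
    proof (cases "tl ts = []")
      case True
      then have "es' \<noteq> []" using ne by auto
      then have "hd es' \<le> e1" using B(6) by simp
      then show ?thesis using True e1oh by simp
    next
      case False
      then show ?thesis using tlo by simp
    qed
  qed
  have psi: "psi_step (concat os0 @ r @ hd ts @ oh, concat (tl ts) @ concat es') (Ow, Ew)"
  proof (rule psi_P[OF LFO, of L oh])
    have "2 \<le> length L" using len2[OF LL(3) Lne] .
    then show "2 \<le> length (concat os0 @ r @ hd ts @ oh)" "2 \<le> length (L @ oh)"
      unfolding O2 by auto
    show "std_fact (L @ oh) L oh" using msuf_std[OF ms] by simp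
    show "w_lt_ext oh (if os0 = [] then None else Some (last os0))"
      using C(6) by (auto simp: wlt_iff)
    show "even (length L)" by (rule LL(3))
    show "Ow = concat os0 @ oh" by (rule C(1))
    show "Ew = L @ concat (tl ts) @ concat es'" using B(1) LL(4) by simp
  qed
  have inv: "Inv (concat os0 @ r @ hd ts @ oh) (concat (tl ts) @ concat es')"
  proof (rule Inv_intro[OF LFO E2(1)])
    show "\<forall>f\<in>set (os0 @ [L @ oh]). odd (length f)" using C LL(3) by auto
    show "sorted_wrt (\<lambda>x y. y < x) (os0 @ [L @ oh])" by (rule strict)
    show "\<forall>f\<in>set (tl ts @ es'). even (length f)" by (rule E2(2))
    assume ne: "concat (tl ts) @ concat es' \<noteq> []"
    note h = hdE[OF ne]
    show "2 \<le> length (os0 @ [L @ oh]) \<Longrightarrow> hd (tl ts @ es') < (os0 @ [L @ oh]) ! (length (os0 @ [L @ oh]) - 2)"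
    proof -
      assume "2 \<le> length (os0 @ [L @ oh])"
      then have ne0: "os0 \<noteq> []" by auto
      then have "(os0 @ [L @ oh]) ! (length (os0 @ [L @ oh]) - 2) = last os0"
        by (cases os0 rule: rev_cases) (auto simp: nth_append)
      moreover have "oh < last os0" using C(6) ne0 by simp
      ultimately show ?thesis using h by simp
    qed
    show "os0 @ [L @ oh] \<noteq> [] \<Longrightarrow> \<forall>s. min_proper_suffix (last (os0 @ [L @ oh])) s \<longrightarrow> hd (tl ts @ es') \<le> s"
    proof (intro impI allI)
      fix s assume "min_proper_suffix (last (os0 @ [L @ oh])) s"
      then have "s = oh" using msuf_unique[OF ms] by force
      then show "hd (tl ts @ es') \<le> s" using h by simp
    qed
  qed
  show ?thesis using psi inv by blast
qed



lemma case_F: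
  fixes Ow Ew :: "'a::linorder list"
  assumes I: "Inv Ow Ew" and es: "LF Ew = e1 # es'"
    and isf: "is_ISF (last_factor Ow) e1 r ts" and lt: "w_lt_ext (hd ts) (last_factor Ow)"
  shows "psi_step (Ow @ hd ts @ r, concat (tl ts) @ concat es') (Ow, Ew) \<and>
         Inv (Ow @ hd ts @ r) (concat (tl ts) @ concat es')"
proof -
  note B = Inv_basic[OF I es]
  note F = isf_facts[OF isf B(2) B(4)]
  note E2 = LF_E2[OF isf I es]
  define os where "os = LF Ow"
  define sj where "sj = hd ts"
  have Oc: "Ow = concat os" using LF_props(1)[of Ow] by (simp add: os_def)
  have osodd: "\<forall>x\<in>set os. odd (length x)" and osstrict: "sorted_wrt (\<lambda>x y. y < x) os"
    using I by (auto simp: Inv_def os_def)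
  have osL: "\<forall>x\<in>set os. lyndon x" using LF_props(2)[of _ Ow] by (auto simp: os_def)
  have lastgt: "os \<noteq> [] \<Longrightarrow> sj < last os"
    using lt by (simp add: last_factor_def os_def sj_def wlt_iff)
  have sjodd: "odd (length sj)"
  proof -
    have "\<not> ext_le_w (last_factor Ow) sj"
      using lt by (cases "LF Ow = []") (auto simp: last_factor_def sj_def wlt_iff wle_iff)
    then show ?thesis using F(9) by (simp add: sj_def)
  qed
  have rodd: "odd (length r)" using F(10) sjodd by (simp add: sj_def)
  have rsj: "r < sj" using F(13) by (simp add: sj_def)
  have sjin: "sj \<in> set ts" using F(11) by (simp add: sj_def)
  have Lsj: "lyndon sj" using F(4) sjin by blast
  have strict: "sorted_wrt (\<lambda>x y. y < x) (os @ [sj, r])"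
  proof -
    have "\<forall>x\<in>set os. sj < x"
    proof
      fix x assume x: "x \<in> set os"
      then have ne: "os \<noteq> []" by auto
      have "last os \<le> x" using sorted_lt_last[OF osstrict x] .
      then show "sj < x" using lastgt[OF ne] by simp
    qed
    then show ?thesis using osstrict rsj by (auto simp: sorted_wrt_append)
  qed
  have O2: "Ow @ hd ts @ r = concat (os @ [sj, r])" using Oc by (simp add: sj_def)
  have LFO: "LF (Ow @ hd ts @ r) = os @ [sj, r]"
    unfolding O2 by (rule LF_intro) (use osL Lsj F(12) strict sorted_strict_le in auto)
  have mono: "\<And>r' s'. min_proper_suffix r s' \<Longrightarrow> r = r' @ s' \<Longrightarrow> sj \<le> s'"
    using std_mono[OF F(2)] by (simp add: sj_def)
  have hdE: "concat (tl ts) @ concat es' \<noteq> [] \<Longrightarrow> hd (tl ts @ es') < sj"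
  proof -
    assume ne: "concat (tl ts) @ concat es' \<noteq> []"
    show ?thesis
    proof (cases "tl ts = []")
      case True
      then have "es' \<noteq> []" using ne by auto
      then have "hd es' \<le> e1" using B(6) by simp
      moreover have "e1 < sj" using F(15) sjin by blast
      ultimately show ?thesis using True by simp
    next
      case False
      then have hin: "hd (tl ts) \<in> set (tl ts)" by simp
      then have "hd (tl ts) \<le> sj" "even (length (hd (tl ts)))" using F(14) F(8) by (auto simp: sj_def)
      moreover have "hd (tl ts) \<noteq> sj" using sjodd calculation(2) by auto
      ultimately show ?thesis using False by simp
    qed
  qed
  have psi: "psi_step (Ow @ hd ts @ r, concat (tl ts) @ concat es') (Ow, Ew)"
  proof (rule psi_F[OF LFO])
    have "sj \<noteq> []" "r \<noteq> []" using Lsj lyndon_nonempty F(6) by auto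
    then show "2 \<le> length (Ow @ hd ts @ r)" by (cases sj; cases r) (auto simp: sj_def)
    show "\<not> splittable (Some sj) r"
    proof
      assume "splittable (Some sj) r"
      then obtain r' s' where st: "std_fact r r' s'" "s' < sj"
        unfolding splittable_def by (auto simp: wlt_iff)
      have "r = r' @ s'" using st by (simp add: std_fact_def)
      then have "sj \<le> s'" using mono std_msuf[OF st(1)] by blast
      then show False using st by simp
    qed
    show "Ow = concat os" by (rule Oc)
    show "Ew = r @ sj @ concat (tl ts) @ concat es'" using B(1) F(7) by (simp add: sj_def)
  qed
  have inv: "Inv (Ow @ hd ts @ r) (concat (tl ts) @ concat es')"
  proof (rule Inv_intro[OF LFO E2(1)])
    show "\<forall>f\<in>set (os @ [sj, r]). odd (length f)" using osodd sjodd rodd by auto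
    show "sorted_wrt (\<lambda>x y. y < x) (os @ [sj, r])" by (rule strict)
    show "\<forall>f\<in>set (tl ts @ es'). even (length f)" by (rule E2(2))
    assume ne: "concat (tl ts) @ concat es' \<noteq> []"
    note h = hdE[OF ne]
    show "2 \<le> length (os @ [sj, r]) \<Longrightarrow> hd (tl ts @ es') < (os @ [sj, r]) ! (length (os @ [sj, r]) - 2)"
      using h by (simp add: nth_append)
    show "os @ [sj, r] \<noteq> [] \<Longrightarrow> \<forall>s. min_proper_suffix (last (os @ [sj, r])) s \<longrightarrow> hd (tl ts @ es') \<le> s"
    proof (intro impI allI)
      fix s assume ms: "min_proper_suffix (last (os @ [sj, r])) s"
      then have ms': "min_proper_suffix r s" by simp
      then obtain q where "r = q @ s" using msuf_split by blast
      then have "sj \<le> s" using mono ms' by blast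
      then show "hd (tl ts @ es') \<le> s" using h by simp
    qed
  qed
  show ?thesis using psi inv by blast
qed



lemma step_lemma:
  fixes Ow Ew :: "'a::linorder list"
  assumes I: "Inv Ow Ew" and st: "omega_step (Ow, Ew) (O2, E2)"
  shows "psi_step (O2, E2) (Ow, Ew) \<and> Inv O2 E2"
proof -
  have ne: "Ew \<noteq> []" using st by (simp add: omega_step_def)
  have "LF Ew \<noteq> []" using ne LF_props(1)[of Ew] by auto
  then obtain e1 es' where es: "LF Ew = e1 # es'" by (cases "LF Ew") auto
  define u where "u = last_factor Ow"
  have D: "(ext_lt_w u e1 \<and> O2 = Ow @ e1 \<and> E2 = concat es') \<or>
       (\<not> ext_lt_w u e1 \<and> (\<exists>r ts. is_ISF u e1 r ts \<and>
          ((ext_le_w u (hd ts) \<and> O2 = concat (butlast (LF Ow)) @ r @ hd ts @ the u \<and>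
              E2 = concat (tl ts) @ concat es') \<or>
           (w_lt_ext (hd ts) u \<and> O2 = Ow @ hd ts @ r \<and>
              E2 = concat (tl ts) @ concat es'))))"
    using st es unfolding omega_step_def Let_def u_def by simp
  have lastdec: "u \<noteq> None \<Longrightarrow> LF Ow = butlast (LF Ow) @ [last (LF Ow)] \<and> u = Some (last (LF Ow))"
    by (cases "LF Ow = []") (auto simp: u_def last_factor_def)
  from D show ?thesis
  proof (elim disjE conjE exE)
    assume a: "ext_lt_w u e1" "O2 = Ow @ e1" "E2 = concat es'"
    then have "u \<noteq> None" by (cases u) auto
    note ld = lastdec[OF this]
    have "last (LF Ow) < e1" using a(1) ld by (simp add: wlt_iff)
    from case_S[OF I es conjunct1[OF ld] this] show ?thesis using a by simp
  next
    fix r ts assume a: "\<not> ext_lt_w u e1" "is_ISF u e1 r ts" "ext_le_w u (hd ts)"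
      "O2 = concat (butlast (LF Ow)) @ r @ hd ts @ the u" "E2 = concat (tl ts) @ concat es'"
    then have "u \<noteq> None" by (cases u) auto
    note ld = lastdec[OF this]
    have nlt: "\<not> last (LF Ow) < e1" using a(1) ld by (simp add: wlt_iff)
    have le: "last (LF Ow) \<le> hd ts" using a(3) ld by (simp add: wle_iff)
    have isf: "is_ISF (Some (last (LF Ow))) e1 r ts" using a(2) ld by simp
    from case_P[OF I es conjunct1[OF ld] nlt isf le] show ?thesis using a ld by simp
  next
    fix r ts assume a: "\<not> ext_lt_w u e1" "is_ISF u e1 r ts" "w_lt_ext (hd ts) u"
      "O2 = Ow @ hd ts @ r" "E2 = concat (tl ts) @ concat es'"
    from case_F[OF I es a(2)[unfolded u_def] a(3)[unfolded u_def]] show ?thesis using a by simp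
  qed
qed

lemma parity_concat: "even (length (concat fs)) \<longleftrightarrow> even (length (filter (\<lambda>f. odd (length f)) fs))"
  by (induct fs) auto

lemma le1_even: "(k::nat) \<le> 1 \<Longrightarrow> even k \<Longrightarrow> k = 0" by presburger
lemma le1_odd: "(k::nat) \<le> 1 \<Longrightarrow> odd k \<Longrightarrow> k = 1" by presburger

lemma Inv_init:
  fixes w :: "'a::linorder list"
  assumes w: "w \<in> We n"
  shows "Inv (fst (omega_init w)) (snd (omega_init w))"
proof -
  define fs where "fs = LF w"
  have W: "\<forall>f\<in>set fs. even (length f) \<or> length f = 1" "length (filter (\<lambda>f. odd (length f)) fs) \<le> 1"
    using w by (auto simp: We_def fs_def)
  have cw: "concat fs = w" using LF_props(1) by (simp add: fs_def)
  have fL: "\<forall>f\<in>set fs. lyndon f" using LF_props(2) by (auto simp: fs_def)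
  have fS: "sorted_wrt (\<lambda>x y. y \<le> x) fs" using LF_props(3) by (simp add: fs_def)
  have LF0: "LF [] = ([] :: 'a list list)" by (rule LF_intro) auto
  show ?thesis
  proof (cases "odd (length w)")
    case False
    then have "even (length (filter (\<lambda>f. odd (length f)) fs))" using parity_concat cw by metis
    then have "length (filter (\<lambda>f. odd (length f)) fs) = 0" using W(2)
      using le1_even by blast
    then have ev: "\<forall>f\<in>set fs. even (length f)" by (auto simp: filter_empty_conv)
    have "omega_init w = ([], w)" using False by (simp add: omega_init_def)
    then show ?thesis using ev LF0 by (simp add: Inv_def fs_def)
  next
    case True
    then have "odd (length (filter (\<lambda>f. odd (length f)) fs))" using parity_concat cw by metis
    then have one: "length (filter (\<lambda>f. odd (length f)) fs) = 1" using W(2)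
      using le1_odd by blast
    have fe: "filter (\<lambda>f. length f = 1) fs = filter (\<lambda>f. odd (length f)) fs"
      using W(1) by (intro filter_cong) auto
    obtain x where x: "filter (\<lambda>f. odd (length f)) fs = [x]" using one
      by (metis length_0_conv length_Suc_conv One_nat_def)
    then have "x \<in> set (filter (\<lambda>f. length f = 1) fs)" using fe by simp
    then have "length x = 1" by simp
    then obtain a where a: "x = [a]" by (metis One_nat_def length_0_conv length_Suc_conv)
    define E0 where "E0 = concat (filter (\<lambda>f. length f \<noteq> 1) fs)"
    have init: "omega_init w = ([a], E0)" using True fe x a
      by (simp add: omega_init_def fs_def E0_def)
    have LFa: "LF [a] = [[a]]" by (rule LF_intro) auto
    have LFE: "LF E0 = filter (\<lambda>f. length f \<noteq> 1) fs"
      by (rule LF_intro) (use fL fS sorted_wrt_filter in \<open>auto simp: E0_def\<close>)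
    have ev: "\<forall>f\<in>set (filter (\<lambda>f. length f \<noteq> 1) fs). even (length f)" using W(1) by auto
    have nomsuf: "\<not> min_proper_suffix [a] s" for s by (simp add: msuf_def2)
    show ?thesis using init LFa LFE ev nomsuf by (simp add: Inv_def)
  qed
qed

lemma reach_Inv: "omega_reach w S \<Longrightarrow> w \<in> We n \<Longrightarrow> Inv (fst S) (snd S)"
proof (induct rule: omega_reach.induct)
  case init
  then show ?case using Inv_init by blast
next
  case (step S1 S2)
  then have "Inv (fst S1) (snd S1)" by blast
  moreover have "omega_step (fst S1, snd S1) (fst S2, snd S2)" using step by simp
  ultimately show ?case using step_lemma by blast
qed

theorem lemma4p24:
  fixes w :: "'a::{linorder,finite} list"
    and O1 E1 O2 E2 :: "'a list"
  assumes "w \<in> We n"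
    and "omega_reach w (O1, E1)"
    and "omega_step (O1, E1) (O2, E2)"
  shows "psi_step (O2, E2) (O1, E1)"
proof -
  have "Inv O1 E1" using reach_Inv[OF assms(2) assms(1)] by simp
  then show ?thesis using step_lemma assms(3) by blast
qed

end
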